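(* Assume that $q$ is $\mathcal{C}$-decomposable for a partition $\mathcal{C}=\{C_1,\ldots,C_r\}$ of $C$, with associated function $\tilde c$. Let $\phi\colon\{0,1\}^n\to\{0,1\}$ be a semicoherent structure with a modular decomposition $$\phi(\mathbf{x})=\psi(\chi_1(\mathbf{x}^{C_1}),\ldots,\chi_r(\mathbf{x}^{C_r})),$$ where $\chi_j\colon\{0,1\}^{C_j}\to\{0,1\}$ and $\psi\colon\{0,1\}^r\to\{0,1\}$ are semicoherent. Then, for every $0\le k\le n$, $$\overline{P}_{n-k}=\sum_{\mathbf{a}\in\mathcal{T}_k}\tilde c(\mathbf{a})\,\widehat{\psi}\big(\overline{P}_{1,n_1-a_1},\ldots,\overline{P}_{r,n_r-a_r}\big).$$
   Context: Consider components $C=[n]$ with random lifetimes $T_1,\ldots,T_n$ whose joint distribution has no ties. Subsets $A$ are identified with Boolean vectors via $x_i=1$ iff $i\in A$, and functions on $\{0,1\}^n$ are viewed as set functions. A structure $\phi\colon\{0,1\}^m\to\{0,1\}$ is semicoherent if it is nondecreasing in each variable, $\phi(0,\ldots,0)=0$ and $\phi(1,\ldots,1)=1$. The relative quality function is $q(A)=\Pr(\max_{i\notin A}T_i<\min_{i\in A}T_i)$, with $q(\varnothing)=q([n])=1$. The tail probability signature of $(C,\phi)$ is $$\overline{P}_k=\sum_{A\subseteq C,\,|A|=n-k}q(A)\,\phi(A),\qquad 0\le k\le n.$$ For $k\ge1$ this equals $\Pr(T_S>T_{k:n})$, where $T_S$ is the system lifetime and $T_{k:n}$ is the $k$-th order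 statistic. For a partition $\mathcal{C}=\{C_1,\ldots,C_r\}$ of $C$ into nonempty blocks, write $n_j=|C_j|$, $A_j=A\cap C_j$, $\mathbf{x}^{C_j}=(x_i)_{i\in C_j}$, and $q^{C_j}(A)=\Pr(\max_{i\in C_j\setminus A}T_i<\min_{i\in A}T_i)$ for $A\subseteq C_j$. The tail probability signature of module $(C_j,\chi_j)$ is $$\overline{P}_{j,k}=\sum_{A\subseteq C_j,\,|A|=n_j-k}q^{C_j}(A)\,\chi_j(A),\qquad 0\le k\le n_j.$$ The function $q$ is $\mathcal{C}$-decomposable if there is $\tilde c\colon\prod_{j=1}^r\{0,\ldots,n_j\}\to\mathbb{R}$ with $q(A)=\tilde c(|A_1|,\ldots,|A_r|)\prod_{j=1}^r q^{C_j}(A_j)$ for all $A\subseteq C$. For $0\le k\le n$ let $\mathcal{T}_k=\{\mathbf{a}\in\mathbb{N}^r:0\le a_j\le n_j,\ \sum_j a_j=k\}$. The multilinear extension of $\psi\colon\{0,1\}^r\to\mathbb{R}$ is $$\widehat\psi(z_1,\ldots,z_r)=\sum_{B\subseteq[r]}\psi(B)\prod_{j\in B}z_j\prod_{j\in[r]\setminus B}(1-z_j)\quad\text{on }[0,1]^r.$$ *)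

theory Defs
  imports "HOL-Probability.Probability"
begin

text \<open>Components are indexed by natural numbers; subsets A are identified with
Boolean vectors. Boolean-valued structures are set functions with values in bool.\<close>

definition semicoherent :: "'a set \<Rightarrow> ('a set \<Rightarrow> bool) \<Rightarrow> bool" where
  "semicoherent S f \<longleftrightarrow>
     (\<forall>A B. A \<subseteq> B \<and> B \<subseteq> S \<and> f A \<longrightarrow> f B) \<and> \<not> f {} \<and> f S"

text \<open>The universally quantified form gives
 the event the whole space when A or S-A is empty, i.e. q({}) = q(S) = 1.\<close>
definition qrel :: "'m measure \<Rightarrow> (nat \<Rightarrow> 'm \<Rightarrow> real) \<Rightarrow> nat set \<Rightarrow> nat set \<Rightarrow> real" where
  "qrel M T S A = measure M {\<omega> \<in> space M. \<forall>i \<in> S - A. \<forall>j \<in> A. T i \<omega> < T j \<omega>}"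

definition tps :: "'m measure \<Rightarrow> (nat \<Rightarrow> 'm \<Rightarrow> real) \<Rightarrow> nat set \<Rightarrow> (nat set \<Rightarrow> bool) \<Rightarrow> nat \<Rightarrow> real" where
  "tps M T S f k = (\<Sum>A \<in> {A. A \<subseteq> S \<and> card A = card S - k}. qrel M T S A * of_bool (f A))"

definition mlext :: "nat \<Rightarrow> (nat set \<Rightarrow> bool) \<Rightarrow> (nat \<Rightarrow> real) \<Rightarrow> real" where
  "mlext r psi z = (\<Sum>B \<in> Pow {1..r}. of_bool (psi B) * (\<Prod>j\<in>B. z j) * (\<Prod>j\<in>{1..r} - B. 1 - z j))"

definition Tset :: "nat \<Rightarrow> (nat \<Rightarrow> nat set) \<Rightarrow> nat \<Rightarrow> (nat \<Rightarrow> nat) set" where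
  "Tset r Cb k = {a. (\<forall>j\<in>{1..r}. a j \<le> card (Cb j)) \<and> (\<forall>j. j \<notin> {1..r} \<longrightarrow> a j = 0)
                      \<and> (\<Sum>j=1..r. a j) = k}"

end

theory Submission
  imports Defs
begin

lemma event_meas:
  fixes T :: "nat \<Rightarrow> 'm \<Rightarrow> real"
  assumes "finite S" "\<And>i. i \<in> S \<Longrightarrow> T i \<in> borel_measurable M"
  shows "{\<omega> \<in> space M. \<forall>i \<in> S - A. \<forall>j \<in> A \<inter> S. T i \<omega> < T j \<omega>} \<in> sets M"
proof -
  have [measurable]: "\<And>i. i \<in> S \<Longrightarrow> T i \<in> borel_measurable M" by fact
  have f: "finite (S - A)" "finite (A \<inter> S)" using assms(1) by auto
  have "Measurable.pred M (\<lambda>\<omega>. \<forall>i\<in>S - A. \<forall>j\<in>A \<inter> S. T i \<omega> < T j \<omega>)"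
  proof (intro pred_intros_finite f)
    fix i j assume "i \<in> S - A" "j \<in> A \<inter> S"
    then have m1: "T i \<in> borel_measurable M" "T j \<in> borel_measurable M" using assms by auto
    show "Measurable.pred M (\<lambda>x. T i x < T j x)" unfolding pred_def
      by (rule borel_measurable_less[OF m1])
  qed
  then show ?thesis by (simp add: pred_def)
qed

lemma exists_top:
  fixes T :: "nat \<Rightarrow> real"
  assumes "finite S" "m \<le> card S" "\<forall>i\<in>S. \<forall>j\<in>S. i \<noteq> j \<longrightarrow> T i \<noteq> T j"
  shows "\<exists>A. A \<subseteq> S \<and> card A = m \<and> (\<forall>i \<in> S - A. \<forall>j \<in> A. T i < T j)"
  using assms(2)
proof (induction m)
  case 0 thus ?case by auto
next
  case (Suc m)
  then obtain A where A: "A \<subseteq> S" "card A = m" "\<forall>i \<in> S - A. \<forall>j \<in> A. T i < T j" by auto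
  have fA: "finite A" using A(1) assms(1) finite_subset by blast
  have ne: "S - A \<noteq> {}"
  proof
    assume "S - A = {}"
    then have "S \<subseteq> A" by auto
    then have "card S \<le> card A" using card_mono fA by auto
    thus False using A Suc.prems by auto
  qed
  have fin: "finite (T ` (S - A))" using assms(1) by auto
  have "Max (T ` (S - A)) \<in> T ` (S - A)" using Max_in[OF fin] ne by auto
  then obtain x where x0: "x \<in> S - A" "Max (T ` (S - A)) = T x" by blast
  then have x: "x \<in> S - A" "T x = Max (T ` (S - A))" by auto
  have xm: "\<And>y. y \<in> S - A \<Longrightarrow> T y \<le> T x" using x Max_ge[OF fin] by auto
  show ?case
  proof (intro exI[of _ "insert x A"] conjI)
    show "insert x A \<subseteq> S" using A x by auto
    show "card (insert x A) = Suc m" using A x fA by auto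
    show "\<forall>i\<in>S - insert x A. \<forall>j\<in>insert x A. T i < T j"
    proof (intro ballI)
      fix i j assume i: "i \<in> S - insert x A" and j: "j \<in> insert x A"
      show "T i < T j"
      proof (cases "j = x")
        case True
        have "T i \<le> T x" using xm i by auto
        moreover have "T i \<noteq> T x"
        proof -
          have "i \<in> S" "x \<in> S" "i \<noteq> x" using i x by auto
          thus ?thesis using assms(3) by blast
        qed
        ultimately show ?thesis using True by auto
      next
        case False thus ?thesis using A(3) i j by auto
      qed
    qed
  qed
qed

lemma qrel_sum_one:
  assumes P: "prob_space M" and "finite S" "m \<le> card S"
    and meas: "\<And>i. i \<in> S \<Longrightarrow> T i \<in> borel_measurable M"
    and noties: "AE \<omega> in M. \<forall>i\<in>S. \<forall>j\<in>S. i \<noteq> j \<longrightarrow> T i \<omega> \<noteq> T j \<omega>"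
  shows "(\<Sum>A \<in> {A. A \<subseteq> S \<and> card A = m}. qrel M T S A) = 1"
proof -
  interpret prob_space M by fact
  define E where "E A = {\<omega> \<in> space M. \<forall>i \<in> S - A. \<forall>j \<in> A. T i \<omega> < T j \<omega>}" for A
  let ?F = "{A. A \<subseteq> S \<and> card A = m}"
  have fF: "finite ?F" using assms(2) by auto
  have Ev: "E A \<in> sets M" if "A \<in> ?F" for A
  proof -
    have "E A = {\<omega> \<in> space M. \<forall>i \<in> S - A. \<forall>j \<in> A \<inter> S. T i \<omega> < T j \<omega>}"
      using that unfolding E_def by auto
    thus ?thesis using event_meas[OF assms(2) meas] by simp
  qed
  have disj: "disjoint_family_on E ?F"
    unfolding disjoint_family_on_def
  proof (intro ballI impI)
    fix A B assume A: "A \<in> ?F" and B: "B \<in> ?F" and ne: "A \<noteq> B"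
    have fA: "finite A" "finite B" using A B assms(2) finite_subset by auto
    have "\<not> A \<subseteq> B"
    proof
      assume "A \<subseteq> B"
      then have "A = B" using card_subset_eq[OF fA(2) \<open>A \<subseteq> B\<close>] A B by auto
      thus False using ne by simp
    qed
    then obtain i where i: "i \<in> A" "i \<notin> B" by auto
    have "\<not> B \<subseteq> A"
    proof
      assume "B \<subseteq> A"
      then have "B = A" using card_subset_eq[OF fA(1) \<open>B \<subseteq> A\<close>] A B by auto
      thus False using ne by simp
    qed
    then obtain j where j: "j \<in> B" "j \<notin> A" by auto
    show "E A \<inter> E B = {}"
    proof (rule ccontr)
      assume "E A \<inter> E B \<noteq> {}"
      then obtain w where "w \<in> E A" "w \<in> E B" by auto
      then have "T j w < T i w" "T i w < T j w" using i j A B unfolding E_def by auto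
      thus False by simp
    qed
  qed
  have "(\<Sum>A \<in> ?F. qrel M T S A) = (\<Sum>A \<in> ?F. measure M (E A))"
    unfolding qrel_def E_def by simp
  also have "\<dots> = measure M (\<Union>A\<in>?F. E A)"
  proof -
    have "E ` ?F \<subseteq> events" using Ev by auto
    from finite_measure_finite_Union[OF fF this disj] show ?thesis by simp
  qed
  also have "\<dots> = 1"
  proof -
    have U: "(\<Union>A\<in>?F. E A) \<in> events" using Ev fF by auto
    have "AE \<omega> in M. \<omega> \<in> (\<Union>A\<in>?F. E A)"
      using noties
    proof (rule AE_mp, intro AE_I2 impI)
      fix w assume w: "w \<in> space M" and nt: "\<forall>i\<in>S. \<forall>j\<in>S. i \<noteq> j \<longrightarrow> T i w \<noteq> T j w"
      obtain A where "A \<subseteq> S \<and> card A = m \<and> (\<forall>i \<in> S - A. \<forall>j \<in> A. T i w < T j w)"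
        using exists_top[OF assms(2,3), of "\<lambda>i. T i w"] nt by auto
      thus "w \<in> (\<Union>A\<in>?F. E A)" using w unfolding E_def by auto
    qed
    thus ?thesis using AE_in_set_eq_1[OF U] by simp
  qed
  finally show ?thesis .
qed

theorem theorem12:
  fixes M :: "'m measure" and T :: "nat \<Rightarrow> 'm \<Rightarrow> real" and n r :: nat
    and Cb :: "nat \<Rightarrow> nat set" and ct :: "(nat \<Rightarrow> nat) \<Rightarrow> real"
    and phi psi :: "nat set \<Rightarrow> bool" and chi :: "nat \<Rightarrow> nat set \<Rightarrow> bool" and k :: nat
  assumes "prob_space M"
    and meas: "\<And>i. i \<in> {1..n} \<Longrightarrow> T i \<in> borel_measurable M"
    and noties: "AE \<omega> in M. \<forall>i\<in>{1..n}. \<forall>j\<in>{1..n}. i \<noteq> j \<longrightarrow> T i \<omega> \<noteq> T j \<omega>"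
    and part_ne: "\<And>j. j \<in> {1..r} \<Longrightarrow> Cb j \<noteq> {}"
    and part_disj: "\<And>i j. i \<in> {1..r} \<Longrightarrow> j \<in> {1..r} \<Longrightarrow> i \<noteq> j \<Longrightarrow> Cb i \<inter> Cb j = {}"
    and part_un: "(\<Union>j\<in>{1..r}. Cb j) = {1..n}"
    and decomp: "\<And>A. A \<subseteq> {1..n} \<Longrightarrow>
        qrel M T {1..n} A = ct (\<lambda>j. if j \<in> {1..r} then card (A \<inter> Cb j) else 0)
                            * (\<Prod>j\<in>{1..r}. qrel M T (Cb j) (A \<inter> Cb j))"
    and sc_phi: "semicoherent {1..n} phi"
    and sc_psi: "semicoherent {1..r} psi"
    and sc_chi: "\<And>j. j \<in> {1..r} \<Longrightarrow> semicoherent (Cb j) (chi j)"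
    and modular: "\<And>A. A \<subseteq> {1..n} \<Longrightarrow> phi A = psi {j \<in> {1..r}. chi j (A \<inter> Cb j)}"
    and "k \<le> n"
  shows "tps M T {1..n} phi (n - k)
       = (\<Sum>a \<in> Tset r Cb k. ct a *
            mlext r psi (\<lambda>j. tps M T (Cb j) (chi j) (card (Cb j) - a j)))"
proof -
  interpret prob_space M by fact
  define S where "S = {1..n}"
  define R where "R = {1..r}"
  define w where "w j X = qrel M T (Cb j) X" for j X
  define sig where "sig A = (\<lambda>j. if j \<in> R then card (A \<inter> Cb j) else 0)" for A
  define Sk where "Sk = {A. A \<subseteq> S \<and> card A = k}"
  define F where "F a j = {X. X \<subseteq> Cb j \<and> card X = a j}" for a j
  have finS: "finite S" and finR: "finite R" unfolding S_def R_def by auto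
  have sub: "Cb j \<subseteq> S" if "j \<in> R" for j using part_un that unfolding S_def R_def by blast
  have finC: "finite (Cb j)" if "j \<in> R" for j using sub[OF that] finS finite_subset by blast
  have disj: "x \<in> Cb i \<Longrightarrow> x \<in> Cb j \<Longrightarrow> i \<in> R \<Longrightarrow> j \<in> R \<Longrightarrow> i = j" for x i j
    using part_disj unfolding R_def by blast
  have AS: "A = (\<Union>j\<in>R. A \<inter> Cb j)" if "A \<subseteq> S" for A
    using that part_un unfolding S_def R_def by blast
  have lhs: "tps M T {1..n} phi (n - k) = (\<Sum>A\<in>Sk. qrel M T S A * of_bool (phi A))"
    unfolding tps_def Sk_def S_def using \<open>k \<le> n\<close> by simp
  have finT: "finite (Tset r Cb k)"
  proof -
    have "Tset r Cb k \<subseteq> (\<lambda>f j. if j \<in> R then f j else 0) ` (PiE R (\<lambda>_. {..k}))"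
    proof
      fix a assume a: "a \<in> Tset r Cb k"
      have le: "a j \<le> k" if "j \<in> R" for j
      proof -
        have "a j \<le> (\<Sum>j=1..r. a j)" using that finR unfolding R_def
          by (intro member_le_sum) auto
        thus ?thesis using a unfolding Tset_def by auto
      qed
      have "a = (\<lambda>j. if j \<in> R then restrict a R j else 0)"
        using a unfolding Tset_def R_def by auto
      moreover have "restrict a R \<in> PiE R (\<lambda>_. {..k})" using le by auto
      ultimately show "a \<in> (\<lambda>f j. if j \<in> R then f j else 0) ` (PiE R (\<lambda>_. {..k}))" by blast
    qed
    moreover have "finite (PiE R (\<lambda>_. {..k::nat}))" using finR by (intro finite_PiE) auto
    ultimately show ?thesis using finite_subset by blast
  qed
  have cardU: "card (\<Union>j\<in>R. G j) = (\<Sum>j\<in>R. card (G j))" if "\<And>j. j \<in> R \<Longrightarrow> G j \<subseteq> Cb j" for G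
  proof (rule card_UN_disjoint[OF finR])
    show "\<forall>i\<in>R. finite (G i)" using that finC finite_subset by blast
    show "\<forall>i\<in>R. \<forall>j\<in>R. i \<noteq> j \<longrightarrow> G i \<inter> G j = {}" using that disj by blast
  qed
  have sigT: "sig A \<in> Tset r Cb k" if "A \<in> Sk" for A
  proof -
    have A: "A \<subseteq> S" "card A = k" using that unfolding Sk_def by auto
    have "(\<Sum>j=1..r. sig A j) = (\<Sum>j\<in>R. card (A \<inter> Cb j))" unfolding sig_def R_def by simp
    also have "\<dots> = card (\<Union>j\<in>R. A \<inter> Cb j)" by (rule cardU[symmetric]) auto
    also have "\<dots> = k" using AS[OF A(1)] A(2) by simp
    finally have "(\<Sum>j=1..r. sig A j) = k" .
    moreover have "sig A j \<le> card (Cb j)" if "j \<in> {1..r}" for j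
      using that finC unfolding sig_def R_def by (auto intro: card_mono)
    ultimately show ?thesis unfolding Tset_def sig_def R_def by auto
  qed
  have finSk: "finite Sk" unfolding Sk_def using finS by auto
  have grp: "(\<Sum>A\<in>Sk. qrel M T S A * of_bool (phi A))
      = (\<Sum>a\<in>Tset r Cb k. \<Sum>A\<in>{A. A \<in> Sk \<and> sig A = a}. qrel M T S A * of_bool (phi A))"
    by (rule sum.group[symmetric, OF finSk finT]) (use sigT in auto)
  have per: "(\<Sum>A\<in>{A. A \<in> Sk \<and> sig A = a}. qrel M T S A * of_bool (phi A))
      = ct a * mlext r psi (\<lambda>j. tps M T (Cb j) (chi j) (card (Cb j) - a j))"
    if aT: "a \<in> Tset r Cb k" for a
  proof -
    have aR: "a j \<le> card (Cb j)" if "j \<in> R" for j using aT that unfolding Tset_def R_def by auto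
    have a0: "a j = 0" if "j \<notin> R" for j using aT that unfolding Tset_def R_def by auto
    have asum: "(\<Sum>j\<in>R. a j) = k" using aT unfolding Tset_def R_def by auto
    define Cl where "Cl = {A. A \<in> Sk \<and> sig A = a}"
    have s1: "(\<Sum>A\<in>Cl. qrel M T S A * of_bool (phi A))
        = ct a * (\<Sum>A\<in>Cl. (\<Prod>j\<in>R. w j (A \<inter> Cb j)) * of_bool (psi {j \<in> R. chi j (A \<inter> Cb j)}))"
    proof -
      have "qrel M T S A * of_bool (phi A)
          = ct a * ((\<Prod>j\<in>R. w j (A \<inter> Cb j)) * of_bool (psi {j \<in> R. chi j (A \<inter> Cb j)}))"
        if "A \<in> Cl" for A
      proof -
        have A: "A \<subseteq> {1..n}" "sig A = a" using that unfolding Cl_def Sk_def S_def by auto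
        have "qrel M T S A = ct a * (\<Prod>j\<in>R. w j (A \<inter> Cb j))"
          using decomp[OF A(1)] A(2) unfolding S_def w_def sig_def R_def by simp
        moreover have "phi A = psi {j \<in> R. chi j (A \<inter> Cb j)}"
          using modular[OF A(1)] unfolding R_def by simp
        ultimately show ?thesis by simp
      qed
      then show ?thesis by (simp add: sum_distrib_left)
    qed
    have inter: "(\<Union>m\<in>R. f m) \<inter> Cb l = f l" if f: "f \<in> PiE R (F a)" and l: "l \<in> R" for f l
    proof
      show "f l \<subseteq> (\<Union>m\<in>R. f m) \<inter> Cb l" using f l unfolding F_def by auto
      show "(\<Union>m\<in>R. f m) \<inter> Cb l \<subseteq> f l"
      proof
        fix x assume "x \<in> (\<Union>m\<in>R. f m) \<inter> Cb l"
        then obtain m where m: "m \<in> R" "x \<in> f m" "x \<in> Cb l" by auto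
        have "x \<in> Cb m" using f m unfolding F_def by auto
        then have "m = l" using disj m l by blast
        thus "x \<in> f l" using m by simp
      qed
    qed
    have s2: "(\<Sum>A\<in>Cl. (\<Prod>j\<in>R. w j (A \<inter> Cb j)) * of_bool (psi {j \<in> R. chi j (A \<inter> Cb j)}))
        = (\<Sum>f\<in>PiE R (F a). (\<Prod>j\<in>R. w j (f j)) * of_bool (psi {j \<in> R. chi j (f j)}))"
    proof (rule sum.reindex_bij_witness[symmetric, of _ "\<lambda>A. restrict (\<lambda>j. A \<inter> Cb j) R" "\<lambda>f. \<Union>m\<in>R. f m"])
      fix f assume f: "f \<in> PiE R (F a)"
      show "restrict (\<lambda>j. (\<Union>m\<in>R. f m) \<inter> Cb j) R = f"
      proof
        fix l show "restrict (\<lambda>j. (\<Union>m\<in>R. f m) \<inter> Cb j) R l = f l"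
          using inter[OF f] f by (cases "l \<in> R") (auto simp: PiE_def extensional_def)
      qed
      have fs: "f j \<subseteq> Cb j" "card (f j) = a j" if "j \<in> R" for j using f that unfolding F_def by auto
      have "(\<Union>m\<in>R. f m) \<subseteq> S" using fs sub by blast
      moreover have "card (\<Union>m\<in>R. f m) = k" using cardU[of f] fs asum by simp
      moreover have "sig (\<Union>m\<in>R. f m) = a"
      proof
        fix l show "sig (\<Union>m\<in>R. f m) l = a l"
          unfolding sig_def using inter[OF f] fs a0 by auto
      qed
      ultimately show "(\<Union>m\<in>R. f m) \<in> Cl" unfolding Cl_def Sk_def by auto
      show "(\<Prod>j\<in>R. w j ((\<Union>m\<in>R. f m) \<inter> Cb j)) * of_bool (psi {j \<in> R. chi j ((\<Union>m\<in>R. f m) \<inter> Cb j)})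
          = (\<Prod>j\<in>R. w j (f j)) * of_bool (psi {j \<in> R. chi j (f j)})"
      proof -
        have "(\<Prod>j\<in>R. w j ((\<Union>m\<in>R. f m) \<inter> Cb j)) = (\<Prod>j\<in>R. w j (f j))"
          using inter[OF f] by (intro prod.cong) auto
        moreover have "{j \<in> R. chi j ((\<Union>m\<in>R. f m) \<inter> Cb j)} = {j \<in> R. chi j (f j)}"
          using inter[OF f] by auto
        ultimately show ?thesis by simp
      qed
    next
      fix A assume A: "A \<in> Cl"
      then have A1: "A \<subseteq> S" "sig A = a" unfolding Cl_def Sk_def by auto
      show "(\<Union>m\<in>R. restrict (\<lambda>j. A \<inter> Cb j) R m) = A" using AS[OF A1(1)] by simp
      show "restrict (\<lambda>j. A \<inter> Cb j) R \<in> PiE R (F a)"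
        using A1(2) unfolding F_def sig_def by (auto dest: fun_cong)
    qed
    have z1: "tps M T (Cb j) (chi j) (card (Cb j) - a j) = (\<Sum>X\<in>F a j. w j X * of_bool (chi j X))"
      if "j \<in> R" for j
      using aR[OF that] unfolding tps_def F_def w_def by simp
    have one: "(\<Sum>X\<in>F a j. w j X) = 1" if j: "j \<in> R" for j
    proof -
      have nt: "AE \<omega> in M. \<forall>i\<in>Cb j. \<forall>l\<in>Cb j. i \<noteq> l \<longrightarrow> T i \<omega> \<noteq> T l \<omega>"
        using noties by eventually_elim (use sub[OF j] in \<open>auto simp: S_def\<close>)
      show ?thesis unfolding F_def w_def
        by (rule qrel_sum_one[OF \<open>prob_space M\<close> finC[OF j] aR[OF j] _ nt])
           (use meas sub[OF j] in \<open>auto simp: S_def\<close>)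
    qed
    have z2: "1 - tps M T (Cb j) (chi j) (card (Cb j) - a j) = (\<Sum>X\<in>F a j. w j X * of_bool (\<not> chi j X))"
      if "j \<in> R" for j
    proof -
      have "(\<Sum>X\<in>F a j. w j X * of_bool (\<not> chi j X)) = (\<Sum>X\<in>F a j. w j X - w j X * of_bool (chi j X))"
        by (intro sum.cong) auto
      also have "\<dots> = 1 - tps M T (Cb j) (chi j) (card (Cb j) - a j)"
        unfolding sum_subtractf one[OF that] z1[OF that] ..
      finally show ?thesis by simp
    qed
    define c where "c B j X = w j X * of_bool (chi j X = (j \<in> B))" for B j X
    have finF: "finite (F a j)" if "j \<in> R" for j unfolding F_def using finC[OF that] by auto
    have s3: "mlext r psi (\<lambda>j. tps M T (Cb j) (chi j) (card (Cb j) - a j))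
        = (\<Sum>B\<in>Pow R. of_bool (psi B) * (\<Sum>f\<in>PiE R (F a). \<Prod>j\<in>R. c B j (f j)))"
    proof -
      have "of_bool (psi B) * (\<Prod>j\<in>B. tps M T (Cb j) (chi j) (card (Cb j) - a j))
              * (\<Prod>j\<in>R - B. 1 - tps M T (Cb j) (chi j) (card (Cb j) - a j))
          = of_bool (psi B) * (\<Sum>f\<in>PiE R (F a). \<Prod>j\<in>R. c B j (f j))" if B: "B \<in> Pow R" for B
      proof -
        have "(\<Prod>j\<in>B. tps M T (Cb j) (chi j) (card (Cb j) - a j))
              * (\<Prod>j\<in>R - B. 1 - tps M T (Cb j) (chi j) (card (Cb j) - a j))
            = (\<Prod>j\<in>B. \<Sum>X\<in>F a j. c B j X) * (\<Prod>j\<in>R - B. \<Sum>X\<in>F a j. c B j X)"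
          using B z1 z2 unfolding c_def by (auto intro!: arg_cong2[where f=times] prod.cong sum.cong)
        also have "\<dots> = (\<Prod>j\<in>R. \<Sum>X\<in>F a j. c B j X)"
          using prod.subset_diff[of B R "\<lambda>j. \<Sum>X\<in>F a j. c B j X"] B finR by (simp add: mult.commute)
        also have "\<dots> = (\<Sum>f\<in>PiE R (F a). \<Prod>j\<in>R. c B j (f j))"
          by (rule prod_sum_PiE[OF finR finF])
        finally show ?thesis by (simp add: mult.assoc)
      qed
      then show ?thesis unfolding mlext_def R_def by (intro sum.cong) auto
    qed
    have s4: "(\<Sum>B\<in>Pow R. of_bool (psi B) * (\<Sum>f\<in>PiE R (F a). \<Prod>j\<in>R. c B j (f j)))
        = (\<Sum>f\<in>PiE R (F a). (\<Prod>j\<in>R. w j (f j)) * of_bool (psi {j \<in> R. chi j (f j)}))"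
    proof -
      have "(\<Sum>B\<in>Pow R. of_bool (psi B) * (\<Sum>f\<in>PiE R (F a). \<Prod>j\<in>R. c B j (f j)))
          = (\<Sum>f\<in>PiE R (F a). \<Sum>B\<in>Pow R. of_bool (psi B) * (\<Prod>j\<in>R. c B j (f j)))"
        by (simp add: sum_distrib_left sum.swap[of _ "Pow R"])
      also have "\<dots> = (\<Sum>f\<in>PiE R (F a). (\<Prod>j\<in>R. w j (f j)) * of_bool (psi {j \<in> R. chi j (f j)}))"
      proof (rule sum.cong[OF refl])
        fix f assume f: "f \<in> PiE R (F a)"
        define Bf where "Bf = {j \<in> R. chi j (f j)}"
        have pc: "(\<Prod>j\<in>R. c B j (f j)) = (if B = Bf then \<Prod>j\<in>R. w j (f j) else 0)" if B: "B \<in> Pow R" for B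
        proof (cases "B = Bf")
          case True
          have "(\<Prod>j\<in>R. c B j (f j)) = (\<Prod>j\<in>R. w j (f j))"
            unfolding c_def using True by (intro prod.cong) (auto simp: Bf_def)
          then show ?thesis using True by simp
        next
          case False
          then obtain j where j: "j \<in> R" "chi j (f j) \<noteq> (j \<in> B)" using B unfolding Bf_def by auto
          then have "c B j (f j) = 0" unfolding c_def by simp
          then have "(\<Prod>j\<in>R. c B j (f j)) = 0" using j finR by (intro prod_zero) auto
          then show ?thesis using False by simp
        qed
        have "(\<Sum>B\<in>Pow R. of_bool (psi B) * (\<Prod>j\<in>R. c B j (f j)))
            = (\<Sum>B\<in>Pow R. if B = Bf then of_bool (psi B) * (\<Prod>j\<in>R. w j (f j)) else 0)"
          using pc by (intro sum.cong) auto
        also have "\<dots> = of_bool (psi Bf) * (\<Prod>j\<in>R. w j (f j))"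
          using finR by (subst sum.delta) (auto simp: Bf_def)
        finally show "(\<Sum>B\<in>Pow R. of_bool (psi B) * (\<Prod>j\<in>R. c B j (f j)))
            = (\<Prod>j\<in>R. w j (f j)) * of_bool (psi {j \<in> R. chi j (f j)})"
          unfolding Bf_def by simp
      qed
      finally show ?thesis .
    qed
    show ?thesis
      unfolding Cl_def[symmetric] s1 s2 s3 s4 ..
  qed
  show ?thesis
    unfolding lhs grp using per by (intro sum.cong) auto
qed

end
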